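(* Let $A$ be a finite set with $|A|=n$. Consider the set of all bijections $f:A\to A$ for which there exists a binary operation $*$ on $A$ such that $(A,* )$ is a cyclic group and $f$ is an automorphism of $(A,* )$. Then these bijections realise at most $\phi(n)$ distinct cycle structures.
   Context: $\phi$ is Euler's totient function. The cycle structure of a bijection $f$ of a finite set is the description of how many cycles of each length $f$ has (a cycle being a sequence $a_1,\dots,a_m$ of distinct elements with $f(a_j)=a_{j+1}$ for $j<m$ and $f(a_m)=a_1$, of length $m$; fixed points are cycles of length $1$). *)

theory Defs
  imports "HOL-Algebra.Elementary_Groups" "HOL-Combinatorics.Orbits" "HOL-Combinatorics.Permutations"
    "HOL-Number_Theory.Totient"
begin

definition cycle_structure :: "'a set \<Rightarrow> ('a \<Rightarrow> 'a) \<Rightarrow> nat \<Rightarrow> nat" where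
  "cycle_structure A f = (\<lambda>m. card {C. \<exists>x\<in>A. C = orbit f x \<and> card C = m})"

end

theory Submission
  imports Defs "HOL-Algebra.Multiplicative_Group"
begin

lemma orbit_conj:
  assumes S: "\<forall>y\<in>S. m y \<in> S" and F: "\<forall>y\<in>S. f (h y) = h (m y)" and x: "x \<in> S"
  shows "orbit f (h x) = h ` orbit m x" and "orbit m x \<subseteq> S"
proof -
  show sub: "orbit m x \<subseteq> S"
  proof
    fix y assume "y \<in> orbit m x" then show "y \<in> S"
      by induction (use S x in auto)
  qed
  show "orbit f (h x) = h ` orbit m x"
  proof
    show "orbit f (h x) \<subseteq> h ` orbit m x"
    proof
      fix z assume "z \<in> orbit f (h x)" then show "z \<in> h ` orbit m x"
      proof induction
        case base then show ?case using F x by (auto intro: orbit.base)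
      next
        case (step y)
        then obtain w where w: "w \<in> orbit m x" "y = h w" by auto
        then have "w \<in> S" using sub by auto
        then show ?case using w F by (auto intro: orbit.step)
      qed
    qed
    show "h ` orbit m x \<subseteq> orbit f (h x)"
    proof
      fix z assume "z \<in> h ` orbit m x"
      then obtain w where w: "w \<in> orbit m x" "z = h w" by auto
      from w(1) have "h w \<in> orbit f (h x)"
      proof induction
        case base then show ?case using F x by (metis orbit.base)
      next
        case (step y)
        then have "y \<in> S" using sub by auto
        then show ?case using step F by (metis orbit.step)
      qed
      then show "z \<in> orbit f (h x)" using w by simp
    qed
  qed
qed

lemma cs_conj:
  assumes B: "bij_betw h S A" and S: "\<forall>y\<in>S. m y \<in> S" and F: "\<forall>y\<in>S. f (h y) = h (m y)"
  shows "cycle_structure A f = cycle_structure S m"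
proof
  fix j
  have inj: "inj_on h S" using B unfolding bij_betw_def by simp
  have A: "A = h ` S" using B unfolding bij_betw_def by simp
  have eq: "{C. \<exists>x\<in>A. C = orbit f x \<and> card C = j} = image h ` {D. \<exists>y\<in>S. D = orbit m y \<and> card D = j}"
  proof (rule Set.set_eqI)
    fix C show "C \<in> {C. \<exists>x\<in>A. C = orbit f x \<and> card C = j} \<longleftrightarrow> C \<in> image h ` {D. \<exists>y\<in>S. D = orbit m y \<and> card D = j}"
  proof (rule iffI)
    assume "C \<in> {C. \<exists>x\<in>A. C = orbit f x \<and> card C = j}"
    then obtain y where y: "y \<in> S" "C = orbit f (h y)" "card C = j" using A by auto
    have o: "C = h ` orbit m y" "orbit m y \<subseteq> S" using orbit_conj[OF S F y(1)] y by auto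
    then have "card (orbit m y) = j" using y o card_image inj inj_on_subset by metis
    then show "C \<in> image h ` {D. \<exists>y\<in>S. D = orbit m y \<and> card D = j}" using o y by blast
  next
    assume "C \<in> image h ` {D. \<exists>y\<in>S. D = orbit m y \<and> card D = j}"
    then obtain y where y: "y \<in> S" "C = h ` orbit m y" "card (orbit m y) = j" by auto
    have o: "C = orbit f (h y)" "orbit m y \<subseteq> S" using orbit_conj[OF S F y(1)] y by auto
    then have "card C = j" using y o card_image inj inj_on_subset by metis
    then show "C \<in> {C. \<exists>x\<in>A. C = orbit f x \<and> card C = j}" using o y A by blast
  qed
  qed
  have "inj_on (image h) {D. \<exists>y\<in>S. D = orbit m y \<and> card D = j}"
    by (rule inj_on_subset[OF inj_on_image_Pow[OF inj]]) (use orbit_conj(2)[OF S F] in auto)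
  then show "cycle_structure A f j = cycle_structure S m j"
    unfolding cycle_structure_def eq by (rule card_image)
qed


theorem corollary2p2:
  fixes A :: "'a set" and n :: nat
  assumes "finite A" and "card A = n"
  shows "card (cycle_structure A ` {f. f permutes A \<and>
            (\<exists>G :: 'a monoid. carrier G = A \<and> group G \<and> cyclic_group G \<and> f \<in> iso G G)})
         \<le> totient n"
proof -
  let ?cs = "\<lambda>k. cycle_structure {..<n} (\<lambda>i. k*i mod n)"
  have sub: "cycle_structure A ` {f. f permutes A \<and>
            (\<exists>G :: 'a monoid. carrier G = A \<and> group G \<and> cyclic_group G \<and> f \<in> iso G G)}
     \<subseteq> ?cs ` totatives n"
  proof
    fix c assume "c \<in> cycle_structure A ` {f. f permutes A \<and>
            (\<exists>G :: 'a monoid. carrier G = A \<and> group G \<and> cyclic_group G \<and> f \<in> iso G G)}"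
    then obtain f and G :: "'a monoid" where f: "f permutes A" and G: "carrier G = A" "group G" "cyclic_group G" "f \<in> iso G G"
      and c: "c = cycle_structure A f" by auto
    interpret group G by fact
    from G(3) obtain g where g: "g \<in> carrier G" "subgroup_generated G {g} = G"
      unfolding cyclic_group_def by auto
    have fin: "finite (carrier G)" using G assms by simp
    have "carrier G = carrier (subgroup_generated G {g})" using g(2) by simp
    also have "\<dots> = generate G {g}" using g(1) carrier_subgroup_generated[of G "{g}"] by auto
    finally have gen: "carrier G = generate G {g}" .
    have ordn: "ord g = n" using generate_pow_card[OF g(1)] gen G(1) assms by simp
    have n0: "n > 0" using ord_ge_1[OF fin g(1)] ordn by simp
    have all: "carrier G = {g [^]\<^bsub>G\<^esub> (i::nat) | i. i \<in> {0..ord g - 1}}"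
      using gen generate_pow_on_finite_carrier[OF fin g(1)] ord_elems[OF fin g(1)] by simp
    have ivl: "{0..ord g - 1} = {..<n}" using ordn n0 by auto
    define h where "h = (\<lambda>i::nat. g [^]\<^bsub>G\<^esub> i)"
    have bij: "bij_betw h {..<n} A"
      unfolding bij_betw_def
    proof
      show "inj_on h {..<n}" using ord_inj[OF g(1)] ivl unfolding h_def by simp
      have "{g [^]\<^bsub>G\<^esub> (i::nat) | i. i \<in> {0..ord g - 1}} = (\<lambda>i. g [^]\<^bsub>G\<^esub> i) ` {0..ord g - 1}" by blast
      then show "h ` {..<n} = A" using all ivl G(1) unfolding h_def by simp
    qed
    have powmod: "g [^]\<^bsub>G\<^esub> (i::nat) = g [^]\<^bsub>G\<^esub> (i mod n)" for i
    proof -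
      have "g [^]\<^bsub>G\<^esub> i = g [^]\<^bsub>G\<^esub> (n * (i div n) + i mod n)" by simp
      also have "\<dots> = (g [^]\<^bsub>G\<^esub> n) [^]\<^bsub>G\<^esub> (i div n) \<otimes>\<^bsub>G\<^esub> g [^]\<^bsub>G\<^esub> (i mod n)"
        using g(1) by (simp add: nat_pow_mult nat_pow_pow)
      also have "\<dots> = g [^]\<^bsub>G\<^esub> (i mod n)" using g(1) ordn[symmetric] by simp
      finally show ?thesis .
    qed
    have hom: "f \<in> hom G G" using G(4) by (simp add: iso_iff)
    have "f g \<in> carrier G" using hom g(1) by (simp add: hom_in_carrier)
    then obtain k0 :: nat where k0: "f g = g [^]\<^bsub>G\<^esub> k0" using all by auto
    define k where "k = (if k0 mod n = 0 then n else k0 mod n)"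
    have "k mod n = k0 mod n" unfolding k_def by auto
    then have fk: "f g = g [^]\<^bsub>G\<^esub> k" using k0 powmod by metis
    have k1: "k \<in> {1..n}" unfolding k_def using n0 by auto
    define m where "m = (\<lambda>i. k*i mod n)"
    have F: "\<forall>y\<in>{..<n}. f (h y) = h (m y)"
    proof
      fix y :: nat
      have "f (h y) = (f g) [^]\<^bsub>G\<^esub> y" unfolding h_def using hom_nat_pow[OF hom g(1) G(2) G(2)] by simp
      also have "\<dots> = g [^]\<^bsub>G\<^esub> (k * y)" using fk g(1) by (simp add: nat_pow_pow)
      also have "\<dots> = h (m y)" unfolding h_def m_def using powmod by metis
      finally show "f (h y) = h (m y)" .
    qed
    have S: "\<forall>y\<in>{..<n}. m y \<in> {..<n}" using n0 by (simp add: m_def)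
    have cs: "c = ?cs k" using cs_conj[OF bij S F] c unfolding m_def by simp
    have injf: "inj_on f A" using f permutes_inj_on by blast
    have injh: "inj_on h {..<n}" using bij bij_betw_def by blast
    have hA: "h x \<in> A" if "x < n" for x using bij that bij_betw_apply by fastforce
    have injm: "inj_on m {..<n}"
    proof (rule inj_onI)
      fix x y assume xy: "x \<in> {..<n}" "y \<in> {..<n}" "m x = m y"
      then have "f (h x) = f (h y)" using F by simp
      then have "h x = h y" using injf hA xy by (meson inj_onD lessThan_iff)
      then show "x = y" using injh xy by (meson inj_onD)
    qed
    have cop: "coprime k n"
    proof (rule ccontr)
      assume nc: "\<not> coprime k n"
      define d where "d = gcd k n"
      have d1: "d \<noteq> 1" using nc unfolding d_def by (simp add: coprime_iff_gcd_eq_1)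
      have dpos: "d > 0" using n0 unfolding d_def by simp
      obtain a where a: "k = d * a" unfolding d_def by (metis dvdE gcd_dvd1)
      obtain b where b: "n = d * b" unfolding d_def by (metis dvdE gcd_dvd2)
      have bpos: "b > 0" using b n0 by (cases b) auto
      have bn: "b < n" using b d1 dpos bpos by (cases d) auto
      have "m b = (a * n) mod n" unfolding m_def using a b by (simp add: ac_simps)
      then have "m b = m 0" unfolding m_def by simp
      then have "b = 0" using injm bn n0 by (meson inj_onD lessThan_iff)
      then show False using bpos by simp
    qed
    have "k \<in> totatives n" using cop k1 unfolding totatives_def by auto
    then show "c \<in> ?cs ` totatives n" using cs by blast
  qed
  have "card (cycle_structure A ` {f. f permutes A \<and>
            (\<exists>G :: 'a monoid. carrier G = A \<and> group G \<and> cyclic_group G \<and> f \<in> iso G G)})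
     \<le> card (?cs ` totatives n)"
    by (rule card_mono[OF _ sub]) simp
  also have "\<dots> \<le> card (totatives n)" by (rule card_image_le) simp
  finally show ?thesis unfolding totient_def .
qed

end
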